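(* Let $\alpha>1$ and let $u_0:[0,\infty)\to[0,\infty)$ be bounded and integrable with $u_0^{\alpha-1}$ Lipschitz continuous; let $m_0(\rho)=\int_0^\rho u_0$ and $P_t(\rho_0)=\rho_0+\alpha\, m_0(\rho_0)\,u_0(\rho_0)^{\alpha-1}\,t$. Then there exists $T>0$ such that for every $t\in[0,T]$ the map $P_t$ is a bi-Lipschitz bijection of $[0,\infty)$, and the function $$u(t,\rho)=\begin{cases}\big(u_0(P_t^{-1}(\rho))^{-\alpha}+\alpha t\big)^{-1/\alpha}, & u_0(P_t^{-1}(\rho))\neq 0,\\ 0,& u_0(P_t^{-1}(\rho))=0,\end{cases}$$ is continuous, so that $m(t,\rho)=\int_0^\rho u(t,\sigma)\,d\sigma$ is a classical ($C^1$) solution of $m_t+m(m_\rho)^\alpha=0$ on $(0,T]\times(0,\infty)$ with $m(0,\cdot)=m_0$, $m(t,0)=0$. (One may take any $T<1/(\alpha L)$ with $L=\sup_{\rho_0\ge0}\big|u_0^\alpha+m_0\,\frac{d}{d\rho_0}(u_0^{\alpha-1})\big|$.)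
   Context: Radially symmetric densities are written as functions of a volume variable $\rho\ge0$, and the mass function is $m(t,\rho)=\int_0^\rho u(t,\sigma)\,d\sigma$, so $u=m_\rho$. The mass equation is $m_t+m(m_\rho)^\alpha=0$. A classical solution is a $C^1$ function satisfying this equation pointwise; "given by characteristics" refers to the explicit formula above. *)

theory Defs
  imports "HOL-Analysis.Analysis"
begin

definition mass0 :: "(real \<Rightarrow> real) \<Rightarrow> real \<Rightarrow> real" where
  "mass0 u0 \<rho> = integral {0..\<rho>} u0"

definition charmap :: "real \<Rightarrow> (real \<Rightarrow> real) \<Rightarrow> real \<Rightarrow> real \<Rightarrow> real" where
  "charmap \<alpha> u0 t \<rho>0 = \<rho>0 + \<alpha> * mass0 u0 \<rho>0 * (u0 \<rho>0) powr (\<alpha> - 1) * t"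

definition charsol :: "real \<Rightarrow> (real \<Rightarrow> real) \<Rightarrow> real \<Rightarrow> real \<Rightarrow> real" where
  "charsol \<alpha> u0 t \<rho> =
     (let v = u0 (inv_into {0..} (charmap \<alpha> u0 t) \<rho>)
      in if v \<noteq> 0 then (v powr (- \<alpha>) + \<alpha> * t) powr (- 1 / \<alpha>) else 0)"

definition mass :: "(real \<Rightarrow> real \<Rightarrow> real) \<Rightarrow> real \<Rightarrow> real \<Rightarrow> real" where
  "mass u t \<rho> = integral {0..\<rho>} (u t)"

definition bilipschitz_on :: "real set \<Rightarrow> (real \<Rightarrow> real) \<Rightarrow> bool" where
  "bilipschitz_on S f \<longleftrightarrow> (\<exists>c C. 0 < c \<and> (\<forall>x\<in>S. \<forall>y\<in>S.
       c * dist x y \<le> dist (f x) (f y) \<and> dist (f x) (f y) \<le> C * dist x y))"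

definition classical_solution_on ::
    "real \<Rightarrow> (real \<times> real) set \<Rightarrow> (real \<Rightarrow> real \<Rightarrow> real) \<Rightarrow> bool" where
  "classical_solution_on \<alpha> S m \<longleftrightarrow>
     (\<exists>mt m\<rho>. continuous_on S mt \<and> continuous_on S m\<rho> \<and>
        (\<forall>p\<in>S. ((\<lambda>(t, \<rho>). m t \<rho>) has_derivative (\<lambda>(h, k). mt p * h + m\<rho> p * k))
                   (at p within S)) \<and>
        (\<forall>p\<in>S. mt p + m (fst p) (snd p) * (m\<rho> p) powr \<alpha> = 0))"

end

theory Submission
  imports Defs
begin


lemma deriv_elim:
  fixes \<Psi> :: "('a::real_normed_vector \<times> 'b::real_normed_vector) \<Rightarrow> real"
  assumes D: "(\<Psi> has_derivative (\<lambda>z. L (fst z))) (at (x, y x))"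
    and bl: "bounded_linear L"
    and K: "K \<ge> 0" "\<forall>x'\<in>S. norm (y x' - y x) \<le> K * norm (x' - x)"
  shows "((\<lambda>x. \<Psi> (x, y x)) has_derivative L) (at x within S)"
  unfolding has_derivative_within_alt
proof (intro conjI allI impI bl)
  fix e :: real assume e: "e > 0"
  have e': "e / (1 + K) > 0" using e K by auto
  from D[unfolded has_derivative_at_alt] e' obtain d where d: "d > 0"
    "\<forall>z. norm (z - (x, y x)) < d \<longrightarrow> norm (\<Psi> z - \<Psi> (x, y x) - L (fst (z - (x, y x)))) \<le> e / (1 + K) * norm (z - (x, y x))"
    by blast
  show "\<exists>d>0. \<forall>x'\<in>S. norm (x' - x) < d \<longrightarrow> norm (\<Psi> (x', y x') - \<Psi> (x, y x) - L (x' - x)) \<le> e * norm (x' - x)"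
  proof (intro exI[of _ "d / (1 + K)"] conjI ballI impI)
    show "d / (1 + K) > 0" using d K by auto
    fix x' assume x': "x' \<in> S" "norm (x' - x) < d / (1 + K)"
    have n: "norm ((x', y x') - (x, y x)) \<le> (1 + K) * norm (x' - x)"
    proof -
      have "norm ((x', y x') - (x, y x)) = norm (x' - x, y x' - y x)" by simp
      also have "\<dots> \<le> norm (x' - x) + norm (y x' - y x)" by (rule norm_Pair_le)
      also have "\<dots> \<le> (1 + K) * norm (x' - x)" using K x' by (simp add: algebra_simps)
      finally show ?thesis .
    qed
    have "(1 + K) * norm (x' - x) < d" using x' K by (simp add: field_simps)
    with n have "norm ((x', y x') - (x, y x)) < d" by linarith
    with d(2) have "norm (\<Psi> (x', y x') - \<Psi> (x, y x) - L (x' - x)) \<le> e / (1 + K) * norm ((x', y x') - (x, y x))"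
      by fastforce
    also have "\<dots> \<le> e / (1 + K) * ((1 + K) * norm (x' - x))"
      using n e' by (intro mult_left_mono) auto
    also have "\<dots> = e * norm (x' - x)" using K by (simp add: field_simps)
    finally show "norm (\<Psi> (x', y x') - \<Psi> (x, y x) - L (x' - x)) \<le> e * norm (x' - x)" .
  qed
qed



definition Epow :: "real \<Rightarrow> real \<Rightarrow> real" where
  "Epow \<beta> G = (if G \<le> 0 then 0 else G powr \<beta>)"

lemma Epow_deriv:
  assumes b: "\<beta> > 1"
  shows "(Epow \<beta> has_real_derivative (if G \<le> 0 then 0 else \<beta> * G powr (\<beta> - 1))) (at G)"
proof (cases "G > 0")
  case True
  have "((\<lambda>x. x powr \<beta>) has_real_derivative \<beta> * G powr (\<beta> - 1)) (at G)"
    using True by (auto intro!: derivative_eq_intros)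
  then have "(Epow \<beta> has_real_derivative \<beta> * G powr (\<beta> - 1)) (at G)"
    by (rule has_field_derivative_transform_within_open[where S="{0<..}"])
       (use True in \<open>auto simp: Epow_def\<close>)
  then show ?thesis using True by simp
next
  case False
  show ?thesis
  proof (cases "G < 0")
    case True
    have "((\<lambda>x. 0) has_real_derivative 0) (at G)" by simp
    then have "(Epow \<beta> has_real_derivative 0) (at G)"
      by (rule has_field_derivative_transform_within_open[where S="{..<0}"])
         (use True in \<open>auto simp: Epow_def\<close>)
    then show ?thesis using True by simp
  next
    case False
    with \<open>\<not> G > 0\<close> have G0: "G = 0" by simp
    have "(Epow \<beta> has_derivative (\<lambda>h. 0 * h)) (at 0)"
      unfolding has_derivative_at_alt
    proof (intro conjI allI impI)
      show "bounded_linear (\<lambda>h::real. 0 * h)" by simp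
      fix e :: real assume e: "e > 0"
      show "\<exists>d>0. \<forall>y. norm (y - 0) < d \<longrightarrow> norm (Epow \<beta> y - Epow \<beta> 0 - 0 * (y - 0)) \<le> e * norm (y - 0)"
      proof (intro exI[of _ "e powr (1 / (\<beta> - 1))"] conjI allI impI)
        show "e powr (1 / (\<beta> - 1)) > 0" using e by simp
        fix y :: real assume y: "norm (y - 0) < e powr (1 / (\<beta> - 1))"
        show "norm (Epow \<beta> y - Epow \<beta> 0 - 0 * (y - 0)) \<le> e * norm (y - 0)"
        proof (cases "y > 0")
          case True
          have "y powr (\<beta> - 1) \<le> (e powr (1 / (\<beta> - 1))) powr (\<beta> - 1)"
            using y True b by (intro powr_mono2) auto
          also have "\<dots> = e" using b e by (simp add: powr_powr)
          finally have le: "y powr (\<beta> - 1) \<le> e" .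
          have "y powr \<beta> = y * y powr (\<beta> - 1)"
            using True by (simp add: powr_diff)
          also have "\<dots> \<le> y * e" using le True by (intro mult_left_mono) auto
          finally show ?thesis using True by (simp add: Epow_def mult.commute)
        next
          case False
          then show ?thesis using e by (simp add: Epow_def mult_nonneg_nonpos)
        qed
      qed
    qed
    then show ?thesis using G0 by (simp add: has_field_derivative_def mult_zero_left[abs_def])
  qed
qed

lemma Epow_nonneg: "Epow \<beta> G \<ge> 0" by (simp add: Epow_def)



locale setting =
  fixes \<alpha> :: real and u0 :: "real \<Rightarrow> real" and B Lg Mb :: real
  assumes a1: "\<alpha> > 1"
    and nn: "\<And>\<rho>. \<rho> \<ge> 0 \<Longrightarrow> 0 \<le> u0 \<rho>"
    and bd: "\<And>\<rho>. \<rho> \<ge> 0 \<Longrightarrow> u0 \<rho> \<le> B"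
    and lip: "Lg-lipschitz_on {0..} (\<lambda>\<rho>. u0 \<rho> powr (\<alpha> - 1))"
    and mb: "\<And>\<rho>. \<rho> \<ge> 0 \<Longrightarrow> mass0 u0 \<rho> \<le> Mb"
begin

definition g where "g \<rho> = u0 \<rho> powr (\<alpha> - 1)"
definition m0 where "m0 = mass0 u0"
definition cc where "cc \<rho> = m0 \<rho> * g \<rho>"
definition Gb where "Gb = B powr (\<alpha> - 1)"
definition Kc where "Kc = B * Gb + Mb * Lg"

lemma Lg_nn: "0 \<le> Lg" using lipschitz_on_nonneg[OF lip] .
lemma B_nn: "0 \<le> B" using nn[of 0] bd[of 0] by simp

lemma g_lip: "\<And>x y. x \<ge> 0 \<Longrightarrow> y \<ge> 0 \<Longrightarrow> \<bar>g x - g y\<bar> \<le> Lg * \<bar>x - y\<bar>"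
  using lip unfolding lipschitz_on_def g_def dist_real_def by auto

lemma g_cont: "continuous_on {0..} g"
  using lipschitz_on_continuous_on[OF lip] unfolding g_def[abs_def] .

lemma g_nn: "x \<ge> 0 \<Longrightarrow> 0 \<le> g x" by (simp add: g_def)
lemma g_bd: assumes "x \<ge> 0" shows "g x \<le> Gb"
  unfolding g_def Gb_def using nn[OF assms] bd[OF assms] a1 by (intro powr_mono2) auto
lemma Gb_nn: "0 \<le> Gb" by (simp add: Gb_def)

lemma u0_eq: "x \<ge> 0 \<Longrightarrow> u0 x = g x powr (1 / (\<alpha> - 1))"
  using a1 nn[of x] by (simp add: g_def powr_powr)

lemma u0_cont: "continuous_on {0..} u0"
proof -
  have "continuous_on {0..} (\<lambda>x. g x powr (1 / (\<alpha> - 1)))"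
    using a1 g_nn by (intro continuous_on_powr' g_cont continuous_on_const) auto
  then show ?thesis
    by (rule continuous_on_cong[THEN iffD1, rotated 2]) (auto simp: u0_eq)
qed

lemma u0_int: "0 \<le> a \<Longrightarrow> u0 integrable_on {a..b}"
  by (rule integrable_continuous_real, rule continuous_on_subset[OF u0_cont]) auto

lemma m0_0: "m0 0 = 0" by (simp add: m0_def mass0_def)

lemma m0_nn: "x \<ge> 0 \<Longrightarrow> 0 \<le> m0 x"
  unfolding m0_def mass0_def using u0_int[of 0 x] nn by (intro integral_nonneg) auto

lemma m0_bd: "x \<ge> 0 \<Longrightarrow> m0 x \<le> Mb" using mb by (simp add: m0_def)
lemma Mb_nn: "0 \<le> Mb" using m0_bd[of 0] by (simp add: m0_0)

lemma m0_diff: assumes "0 \<le> y" "y \<le> x" shows "0 \<le> m0 x - m0 y" "m0 x - m0 y \<le> B * (x - y)"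
proof -
  have eq: "m0 x - m0 y = integral {y..x} u0"
    using Henstock_Kurzweil_Integration.integral_combine[OF assms(1) assms(2) u0_int[of 0 x, OF order_refl]] by (simp add: m0_def mass0_def)
  show "0 \<le> m0 x - m0 y" unfolding eq using u0_int[of y x] nn assms by (intro integral_nonneg) auto
  have "integral {y..x} u0 \<le> integral {y..x} (\<lambda>_. B)"
    using u0_int[of y x] bd assms by (intro integral_le) auto
  also have "\<dots> = B * (x - y)" using assms by simp
  finally show "m0 x - m0 y \<le> B * (x - y)" unfolding eq .
qed

lemma m0_lip: "x \<ge> 0 \<Longrightarrow> y \<ge> 0 \<Longrightarrow> \<bar>m0 x - m0 y\<bar> \<le> B * \<bar>x - y\<bar>"
  using m0_diff[of x y] m0_diff[of y x] by (cases "y \<le> x") (auto simp: algebra_simps)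

lemma m0_cont: "continuous_on {0..} m0"
proof -
  have "B-lipschitz_on {0..} m0"
    unfolding lipschitz_on_def dist_real_def using m0_lip B_nn by auto
  then show ?thesis by (rule lipschitz_on_continuous_on)
qed

lemma m0_deriv: assumes "s > 0" shows "(m0 has_real_derivative u0 s) (at s)"
proof -
  have "((\<lambda>u. integral {0..u} u0) has_vector_derivative u0 s) (at s within {0..s+1})"
    using assms by (intro integral_has_vector_derivative continuous_on_subset[OF u0_cont]) auto
  then have "((\<lambda>u. integral {0..u} u0) has_vector_derivative u0 s) (at s)"
    using assms by (subst (asm) at_within_interior) auto
  then show ?thesis
    by (simp add: m0_def mass0_def[abs_def] has_real_derivative_iff_has_vector_derivative)
qed

lemma cc_nn: "x \<ge> 0 \<Longrightarrow> 0 \<le> cc x" by (simp add: cc_def m0_nn g_nn)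
lemma cc_bd: "x \<ge> 0 \<Longrightarrow> cc x \<le> Mb * Gb"
  unfolding cc_def using m0_nn m0_bd g_nn g_bd by (intro mult_mono) (auto intro: order_trans)

lemma Kc_nn: "0 \<le> Kc" unfolding Kc_def using B_nn Gb_nn Mb_nn Lg_nn by simp

lemma cc_lip: assumes "x \<ge> 0" "y \<ge> 0" shows "\<bar>cc x - cc y\<bar> \<le> Kc * \<bar>x - y\<bar>"
proof -
  have "cc x - cc y = (m0 x - m0 y) * g x + m0 y * (g x - g y)"
    by (simp add: cc_def algebra_simps)
  then have "\<bar>cc x - cc y\<bar> \<le> \<bar>m0 x - m0 y\<bar> * \<bar>g x\<bar> + \<bar>m0 y\<bar> * \<bar>g x - g y\<bar>"
    by (metis abs_mult abs_triangle_ineq)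
  also have "\<dots> \<le> (B * \<bar>x - y\<bar>) * Gb + Mb * (Lg * \<bar>x - y\<bar>)"
    using assms m0_lip g_nn g_bd m0_nn m0_bd g_lip B_nn Mb_nn
    by (intro add_mono mult_mono) auto
  also have "\<dots> = Kc * \<bar>x - y\<bar>" by (simp add: Kc_def algebra_simps)
  finally show ?thesis .
qed

definition P where "P t s = charmap \<alpha> u0 t s"
lemma P_eq: "P t s = s + \<alpha> * cc s * t"
  by (simp add: P_def charmap_def cc_def g_def m0_def)

definition T0 where "T0 = 1 / (2 * \<alpha> * (Kc + 1))"
lemma T0_pos: "T0 > 0" using a1 Kc_nn by (simp add: T0_def)

lemma small: assumes "0 \<le> t" "t \<le> T0" shows "\<alpha> * t * Kc \<le> 1 / 2"
proof -
  have "\<alpha> * t * Kc \<le> \<alpha> * T0 * Kc" using assms a1 Kc_nn by (intro mult_right_mono) auto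
  also have "\<dots> = Kc / (2 * (Kc + 1))" using a1 Kc_nn by (simp add: T0_def)
  also have "\<dots> \<le> 1 / 2" using Kc_nn by (simp add: field_simps)
  finally show ?thesis .
qed

lemma P_dev: assumes "0 \<le> t" "t \<le> T0" "x \<ge> 0" "y \<ge> 0"
  shows "\<bar>(P t x - P t y) - (x - y)\<bar> \<le> \<bar>x - y\<bar> / 2"
proof -
  have "(P t x - P t y) - (x - y) = \<alpha> * t * (cc x - cc y)"
    by (simp add: P_eq algebra_simps)
  then have "\<bar>(P t x - P t y) - (x - y)\<bar> = \<alpha> * t * \<bar>cc x - cc y\<bar>"
    using assms a1 by (simp add: abs_mult)
  also have "\<dots> \<le> \<alpha> * t * (Kc * \<bar>x - y\<bar>)"
    using assms a1 cc_lip by (intro mult_left_mono) auto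
  also have "\<dots> = (\<alpha> * t * Kc) * \<bar>x - y\<bar>" by simp
  also have "\<dots> \<le> (1/2) * \<bar>x - y\<bar>" using small[OF assms(1,2)] by (intro mult_right_mono) auto
  finally show ?thesis by simp
qed

lemma aux1: "(a::real) \<le> b + c \<Longrightarrow> c \<le> a/2 \<Longrightarrow> a/2 \<le> b" by linarith
lemma aux2: "(b::real) \<le> a + c \<Longrightarrow> c \<le> a/2 \<Longrightarrow> b \<le> 3/2 * a" by linarith

lemma P_lower1: assumes "0 \<le> t" "t \<le> T0" "x \<ge> 0" "y \<ge> 0"
  shows "\<bar>x - y\<bar> / 2 \<le> \<bar>P t x - P t y\<bar>"
proof -
  have h: "\<bar>(P t x - P t y) - (x - y)\<bar> \<le> \<bar>x - y\<bar> / 2" by (rule P_dev[OF assms])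
  have "\<bar>x - y\<bar> \<le> \<bar>P t x - P t y\<bar> + \<bar>(P t x - P t y) - (x - y)\<bar>" by (metis abs_minus_commute abs_triangle_ineq diff_add_cancel add.commute)
  from aux1[OF this h] show ?thesis .
qed

lemma P_lower2: assumes "0 \<le> t" "t \<le> T0" "x \<ge> 0" "y \<ge> 0"
  shows "\<bar>P t x - P t y\<bar> \<le> 3 / 2 * \<bar>x - y\<bar>"
proof -
  have h: "\<bar>(P t x - P t y) - (x - y)\<bar> \<le> \<bar>x - y\<bar> / 2" by (rule P_dev[OF assms])
  have "\<bar>P t x - P t y\<bar> \<le> \<bar>x - y\<bar> + \<bar>(P t x - P t y) - (x - y)\<bar>" by (metis abs_triangle_ineq add.commute diff_add_cancel)
  from aux2[OF this h] show ?thesis .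
qed

lemmas P_lower = P_lower1 P_lower2

lemma P_mono: assumes "0 \<le> t" "t \<le> T0" "x \<ge> 0" "y \<ge> 0" "y < x" shows "P t y < P t x"
proof -
  have h: "\<bar>(P t x - P t y) - (x - y)\<bar> \<le> \<bar>x - y\<bar> / 2" by (rule P_dev[OF assms(1-4)])
  have "\<bar>x - y\<bar> = x - y" using assms(5) by simp
  with h have "(x - y) - (P t x - P t y) \<le> (x - y) / 2" by linarith
  then show ?thesis using assms(5) by simp
qed

lemma P_ge: "0 \<le> t \<Longrightarrow> x \<ge> 0 \<Longrightarrow> x \<le> P t x"
  using cc_nn[of x] a1 by (simp add: P_eq)

lemma P_0: "P t 0 = 0" by (simp add: P_eq cc_def m0_0)

lemma P_cont: assumes "0 \<le> t" "t \<le> T0" shows "continuous_on {0..} (P t)"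
proof -
  have "(3/2)-lipschitz_on {0..} (P t)"
    unfolding lipschitz_on_def dist_real_def using P_lower[OF assms] by auto
  then show ?thesis by (rule lipschitz_on_continuous_on)
qed

lemma P_inj: assumes "0 \<le> t" "t \<le> T0" shows "inj_on (P t) {0..}"
proof
  fix x y :: real assume "x \<in> {0..}" "y \<in> {0..}" "P t x = P t y"
  then show "x = y" using P_lower[OF assms, of x y] by auto
qed

lemma P_bij: assumes "0 \<le> t" "t \<le> T0" shows "bij_betw (P t) {0..} {0..}"
  unfolding bij_betw_def
proof (intro conjI P_inj[OF assms] equalityI subsetI)
  fix y assume "y \<in> P t ` {0..}"
  then show "y \<in> {0..}" using P_ge assms by force
next
  fix y :: real assume y: "y \<in> {0..}"
  have "\<exists>x. 0 \<le> x \<and> x \<le> y \<and> P t x = y"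
    using y P_0 P_ge[of t y] assms
    by (intro IVT' continuous_on_subset[OF P_cont[OF assms]]) auto
  then show "y \<in> P t ` {0..}" by force
qed

lemma P_bilip: assumes "0 \<le> t" "t \<le> T0" shows "bilipschitz_on {0..} (P t)"
  unfolding bilipschitz_on_def dist_real_def
  by (rule exI[of _ "1/2"], rule exI[of _ "3/2"]) (use P_lower[OF assms] in auto)

end


context setting begin

definition Q where "Q t \<rho> = inv_into {0..} (P t) \<rho>"
definition Cb where "Cb = Mb * Gb"
definition KQ where "KQ = 2 + 2 * \<alpha> * Cb"

lemma Cb_nn: "0 \<le> Cb" by (simp add: Cb_def Mb_nn Gb_nn)
lemma KQ_pos: "0 < KQ" using Cb_nn a1 by (simp add: KQ_def add_pos_nonneg)

lemma P_fun: "P t = charmap \<alpha> u0 t" by (rule ext) (simp add: P_def)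

lemma Q_props:
  assumes "0 \<le> t" "t \<le> T0" "0 \<le> \<rho>"
  shows "0 \<le> Q t \<rho>" "P t (Q t \<rho>) = \<rho>"
proof -
  have "\<rho> \<in> P t ` {0..}" using P_bij[OF assms(1,2)] assms(3) by (auto simp: bij_betw_def)
  then show "0 \<le> Q t \<rho>" "P t (Q t \<rho>) = \<rho>"
    unfolding Q_def using inv_into_into[of \<rho> "P t" "{0..}"] f_inv_into_f[of \<rho> "P t" "{0..}"] by auto
qed

lemma QP: assumes "0 \<le> t" "t \<le> T0" "0 \<le> s" shows "Q t (P t s) = s"
  unfolding Q_def using inv_into_f_f[OF P_inj[OF assms(1,2)]] assms(3) by auto

lemma Q_lip:
  assumes "0 \<le> t" "t \<le> T0" "0 \<le> t'" "t' \<le> T0" "0 \<le> \<rho>" "0 \<le> \<rho>'"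
  shows "\<bar>Q t \<rho> - Q t' \<rho>'\<bar> \<le> 2 * \<bar>\<rho> - \<rho>'\<bar> + 2 * \<alpha> * Cb * \<bar>t - t'\<bar>"
proof -
  define s where "s = Q t \<rho>"
  define s' where "s' = Q t' \<rho>'"
  have s: "0 \<le> s" "P t s = \<rho>" using Q_props[OF assms(1,2,5)] by (auto simp: s_def)
  have s': "0 \<le> s'" "P t' s' = \<rho>'" using Q_props[OF assms(3,4,6)] by (auto simp: s'_def)
  have "\<bar>s - s'\<bar> / 2 \<le> \<bar>P t s - P t s'\<bar>" by (rule P_lower1[OF assms(1,2) s(1) s'(1)])
  also have "P t s - P t s' = (\<rho> - \<rho>') - \<alpha> * cc s' * (t - t')"
    using s s' by (simp add: P_eq algebra_simps)
  also have "\<bar>(\<rho> - \<rho>') - \<alpha> * cc s' * (t - t')\<bar> \<le> \<bar>\<rho> - \<rho>'\<bar> + \<alpha> * cc s' * \<bar>t - t'\<bar>"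
  proof -
    have "\<bar>\<alpha> * cc s' * (t - t')\<bar> = \<alpha> * cc s' * \<bar>t - t'\<bar>"
      using a1 cc_nn[OF s'(1)] by (simp add: abs_mult)
    then show ?thesis using abs_triangle_ineq4[of "\<rho> - \<rho>'" "\<alpha> * cc s' * (t - t')"] by simp
  qed
  also have "\<dots> \<le> \<bar>\<rho> - \<rho>'\<bar> + \<alpha> * Cb * \<bar>t - t'\<bar>"
    using a1 cc_bd[OF s'(1)] by (simp add: Cb_def mult_right_mono)
  finally show ?thesis by (simp add: s_def s'_def)
qed

lemma Q_lip_norm:
  assumes "p \<in> {0..T0} \<times> {0..}" "p' \<in> {0..T0} \<times> {0..}"
  shows "\<bar>Q (fst p') (snd p') - Q (fst p) (snd p)\<bar> \<le> KQ * norm (p' - p)"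
proof -
  have h: "\<bar>Q (fst p') (snd p') - Q (fst p) (snd p)\<bar> \<le> 2 * \<bar>snd p' - snd p\<bar> + 2 * \<alpha> * Cb * \<bar>fst p' - fst p\<bar>"
    using assms by (intro Q_lip) auto
  have a: "\<bar>snd p' - snd p\<bar> \<le> norm (p' - p)" using dist_snd_le[of p' p] by (simp add: dist_norm dist_real_def)
  have b: "\<bar>fst p' - fst p\<bar> \<le> norm (p' - p)" using dist_fst_le[of p' p] by (simp add: dist_norm dist_real_def)
  have "2 * \<bar>snd p' - snd p\<bar> + 2 * \<alpha> * Cb * \<bar>fst p' - fst p\<bar> \<le> 2 * norm (p' - p) + 2 * \<alpha> * Cb * norm (p' - p)"
    using a b a1 Cb_nn by (intro add_mono mult_left_mono) auto
  with h show ?thesis by (simp add: KQ_def algebra_simps)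
qed

lemma Q_cont: "continuous_on ({0..T0} \<times> {0..}) (\<lambda>p. Q (fst p) (snd p))"
proof -
  have "KQ-lipschitz_on ({0..T0} \<times> {0..}) (\<lambda>p. Q (fst p) (snd p))"
    unfolding lipschitz_on_def using KQ_pos Q_lip_norm by (auto simp: dist_real_def dist_norm)
  then show ?thesis by (rule lipschitz_on_continuous_on)
qed

definition Kf where "Kf t v = v * (1 + \<alpha> * t * v powr \<alpha>) powr (- 1 / \<alpha>)"

lemma Kf_eq: assumes "0 \<le> t" "0 \<le> v"
  shows "(if v \<noteq> 0 then (v powr (- \<alpha>) + \<alpha> * t) powr (- 1 / \<alpha>) else 0) = Kf t v"
proof (cases "v = 0")
  case True then show ?thesis by (simp add: Kf_def)
next
  case False
  then have v: "v > 0" using assms by simp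
  have w: "0 \<le> 1 + \<alpha> * t * v powr \<alpha>" using assms a1 by simp
  have "v powr (- \<alpha>) + \<alpha> * t = v powr (- \<alpha>) * (1 + \<alpha> * t * v powr \<alpha>)"
    using v by (simp add: algebra_simps powr_minus field_simps)
  then have "(v powr (- \<alpha>) + \<alpha> * t) powr (- 1 / \<alpha>) = (v powr (- \<alpha>)) powr (- 1 / \<alpha>) * (1 + \<alpha> * t * v powr \<alpha>) powr (- 1 / \<alpha>)"
    using w by (simp add: powr_mult)
  also have "(v powr (- \<alpha>)) powr (- 1 / \<alpha>) = v" using a1 v by (simp add: powr_powr)
  finally show ?thesis using False by (simp add: Kf_def)
qed

lemma charsol_eq: assumes "0 \<le> t" "t \<le> T0" "0 \<le> \<rho>"
  shows "charsol \<alpha> u0 t \<rho> = Kf t (u0 (Q t \<rho>))"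
  unfolding charsol_def Let_def P_fun[symmetric] Q_def[symmetric]
  using Kf_eq[OF assms(1) nn[OF Q_props(1)[OF assms]]] by simp

lemma Kf_nn: "0 \<le> t \<Longrightarrow> 0 \<le> v \<Longrightarrow> 0 \<le> Kf t v" by (simp add: Kf_def)

lemma uQ_cont: "continuous_on ({0..T0} \<times> {0..}) (\<lambda>p. u0 (Q (fst p) (snd p)))"
  by (rule continuous_on_compose2[OF u0_cont Q_cont]) (auto intro: Q_props(1))

lemma charsol_cont: "continuous_on ({0..T0} \<times> {0..}) (\<lambda>(t, \<rho>). charsol \<alpha> u0 t \<rho>)"
proof -
  let ?v = "\<lambda>p. u0 (Q (fst p) (snd p))"
  have vnn: "\<forall>p\<in>{0..T0} \<times> {0::real..}. 0 \<le> ?v p"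
    using nn Q_props(1) by (auto simp del: atLeast_iff)
  have c1: "continuous_on ({0..T0} \<times> {0..}) (\<lambda>p. ?v p powr \<alpha>)"
    using vnn a1 by (intro continuous_on_powr' uQ_cont continuous_on_const) auto
  have c2: "continuous_on ({0..T0} \<times> {0..}) (\<lambda>p. 1 + \<alpha> * fst p * ?v p powr \<alpha>)"
    by (intro c1 continuous_on_add continuous_on_mult continuous_on_const continuous_on_fst continuous_on_id)
  have c3: "continuous_on ({0..T0} \<times> {0..}) (\<lambda>p. (1 + \<alpha> * fst p * ?v p powr \<alpha>) powr (- 1 / \<alpha>))"
  proof (intro continuous_on_powr c2 continuous_on_const ballI)
    fix p assume "p \<in> {0..T0} \<times> {0::real..}"
    then have "0 \<le> \<alpha> * fst p * ?v p powr \<alpha>" using a1 by auto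
    then show "1 + \<alpha> * fst p * ?v p powr \<alpha> \<noteq> 0" by linarith
  qed
  have "continuous_on ({0..T0} \<times> {0..}) (\<lambda>p. ?v p * (1 + \<alpha> * fst p * ?v p powr \<alpha>) powr (- 1 / \<alpha>))"
    by (intro continuous_on_mult uQ_cont c3)
  then show ?thesis
    by (rule continuous_on_cong[THEN iffD1, rotated 2]) (auto simp: charsol_eq Kf_def)
qed

end


context setting begin

definition \<gamma> where "\<gamma> = (\<alpha> - 1) / \<alpha>"
definition \<beta> where "\<beta> = \<alpha> / (\<alpha> - 1)"
definition Mf where "Mf t \<rho> = m0 (Q t \<rho>) * (1 + \<alpha> * t * u0 (Q t \<rho>) powr \<alpha>) powr \<gamma>"

definition \<Psi> :: "real \<Rightarrow> (real \<times> real) \<times> (real \<times> real) \<Rightarrow> real" where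
  "\<Psi> \<kappa> z = m0 (fst (snd z)) * (1 + \<alpha> * fst (fst z) * Epow \<beta> (snd (snd z))) powr \<gamma>
     + \<kappa> * (snd (fst z) - (fst (snd z) + \<alpha> * m0 (fst (snd z)) * snd (snd z) * fst (fst z)))"

definition yQ where "yQ p = (Q (fst p) (snd p), g (Q (fst p) (snd p)))"

lemma beta_gt: "\<beta> > 1" using a1 by (simp add: \<beta>_def)

lemma Epow_g: assumes "s \<ge> 0" shows "Epow \<beta> (g s) = u0 s powr \<alpha>"
proof (cases "u0 s = 0")
  case True then show ?thesis by (simp add: Epow_def g_def)
next
  case False
  then have "u0 s > 0" using nn[OF assms] by simp
  then show ?thesis using a1 by (simp add: Epow_def g_def powr_powr \<beta>_def)
qed

lemma Psi_y: assumes "0 \<le> t" "t \<le> T0" "0 \<le> \<rho>"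
  shows "\<Psi> \<kappa> ((t, \<rho>), yQ (t, \<rho>)) = Mf t \<rho>"
proof -
  have "P t (Q t \<rho>) = \<rho>" by (rule Q_props[OF assms])
  then have "\<rho> - (Q t \<rho> + \<alpha> * m0 (Q t \<rho>) * g (Q t \<rho>) * t) = 0"
    by (simp add: P_eq cc_def algebra_simps)
  then show ?thesis
    by (simp add: \<Psi>_def yQ_def Mf_def Epow_g[OF Q_props(1)[OF assms]])
qed

lemma yQ_lip: assumes "p \<in> {0..T0} \<times> {0..}" "p' \<in> {0..T0} \<times> {0..}"
  shows "norm (yQ p' - yQ p) \<le> (KQ * (1 + Lg)) * norm (p' - p)"
proof -
  let ?s = "Q (fst p) (snd p)" and ?s' = "Q (fst p') (snd p')"
  have s: "0 \<le> ?s" "0 \<le> ?s'" using assms Q_props(1) by auto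
  have "norm (yQ p' - yQ p) = norm (?s' - ?s, g ?s' - g ?s)" by (simp add: yQ_def)
  also have "\<dots> \<le> norm (?s' - ?s) + norm (g ?s' - g ?s)" by (rule norm_Pair_le)
  also have "\<dots> \<le> \<bar>?s' - ?s\<bar> + Lg * \<bar>?s' - ?s\<bar>" using g_lip[OF s(2) s(1)] by simp
  also have "\<dots> = (1 + Lg) * \<bar>?s' - ?s\<bar>" by (simp add: algebra_simps)
  also have "\<dots> \<le> (1 + Lg) * (KQ * norm (p' - p))"
    using Q_lip_norm[OF assms] Lg_nn by (intro mult_left_mono) auto
  finally show ?thesis by (simp add: algebra_simps)
qed

end


context setting begin

lemma Psi_deriv:
  fixes t0 rr s0 GG :: real
  assumes s0: "s0 > 0" and t0: "t0 \<ge> 0"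
  defines "w \<equiv> 1 + \<alpha> * t0 * Epow \<beta> GG"
  defines "E1 \<equiv> (if GG \<le> 0 then 0 else \<beta> * GG powr (\<beta> - 1))"
  shows "(\<Psi> \<kappa> has_derivative (\<lambda>h. fst (snd h) * u0 s0 * w powr \<gamma>
      + m0 s0 * (\<gamma> * w powr (\<gamma> - 1) * (\<alpha> * (fst (fst h) * Epow \<beta> GG + t0 * (snd (snd h) * E1))))
      + \<kappa> * (snd (fst h) - (fst (snd h) + \<alpha> * (fst (snd h) * u0 s0 * GG * t0 + m0 s0 * snd (snd h) * t0 + m0 s0 * GG * fst (fst h))))))
     (at ((t0, rr), (s0, GG)))"
proof -
  let ?z0 = "((t0, rr), (s0, GG))"
  have d1: "((\<lambda>z. m0 (fst (snd z))) has_derivative (\<lambda>h. fst (snd h) * u0 s0)) (at ?z0)"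
    using DERIV_compose_FDERIV[OF _ has_derivative_fst[OF has_derivative_snd[OF has_derivative_ident]], of m0 "u0 s0" ?z0 UNIV]
      m0_deriv[OF s0] by simp
  have d2: "((\<lambda>z. Epow \<beta> (snd (snd z))) has_derivative (\<lambda>h. snd (snd h) * E1)) (at ?z0)"
    using DERIV_compose_FDERIV[OF _ has_derivative_snd[OF has_derivative_snd[OF has_derivative_ident]], of "Epow \<beta>" E1 ?z0 UNIV]
      Epow_deriv[OF beta_gt, of GG] by (simp add: E1_def)
  have wpos: "w > 0" unfolding w_def using t0 a1 Epow_nonneg[of \<beta> GG]
    by (smt (verit) mult_nonneg_nonneg)
  show ?thesis
    unfolding \<Psi>_def[abs_def]
    apply (rule has_derivative_eq_rhs)
     apply (rule derivative_eq_intros d1 d2 refl | simp add: wpos w_def[symmetric])+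
    apply (rule ext)
    using wpos by (simp add: powr_diff field_simps)
qed

end


context setting begin

lemma gamma_eq: "\<gamma> = 1 - 1 / \<alpha>" using a1 by (simp add: \<gamma>_def field_simps)

lemma point_alg:
  fixes v t0 M :: real
  assumes v: "v \<ge> 0" and t0: "t0 \<ge> 0"
  defines "G0 \<equiv> v powr (\<alpha> - 1)"
  defines "w \<equiv> 1 + \<alpha> * t0 * v powr \<alpha>"
  defines "\<kappa> \<equiv> v * w powr (- 1 / \<alpha>)"
  defines "E1 \<equiv> (if G0 \<le> 0 then 0 else \<beta> * G0 powr (\<beta> - 1))"
  shows "v * w powr \<gamma> - \<kappa> * (1 + \<alpha> * v * G0 * t0) = 0"
    and "\<gamma> * w powr (\<gamma> - 1) * E1 = \<kappa>"
    and "M * (\<gamma> * w powr (\<gamma> - 1) * \<alpha> * v powr \<alpha>) - \<kappa> * \<alpha> * M * G0 = - (M * w powr \<gamma>) * \<kappa> powr \<alpha>"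
proof -
  have wpos: "w > 0" unfolding w_def using a1 t0 v by (simp add: add_pos_nonneg)
  define \<omega> where "\<omega> = w powr (- 1 / \<alpha>)"
  have wg: "w powr \<gamma> = w * \<omega>" using wpos by (simp add: gamma_eq \<omega>_def powr_diff powr_minus divide_inverse)
  have wg1: "w powr (\<gamma> - 1) = \<omega>" using wpos by (simp add: gamma_eq \<omega>_def)
  have vG: "v * G0 = v powr \<alpha>"
  proof (cases "v = 0")
    case True then show ?thesis using a1 by (simp add: G0_def)
  next
    case False then have "v > 0" using v by simp
    then show ?thesis by (simp add: G0_def powr_add[symmetric] powr_mult_base)
  qed
  have w_eq: "1 + \<alpha> * v * G0 * t0 = w"
    unfolding w_def using vG by (simp add: algebra_simps flip: vG)
  show "v * w powr \<gamma> - \<kappa> * (1 + \<alpha> * v * G0 * t0) = 0"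
    unfolding w_eq \<kappa>_def wg \<omega>_def[symmetric] by simp
  show "\<gamma> * w powr (\<gamma> - 1) * E1 = \<kappa>"
  proof (cases "v = 0")
    case True then show ?thesis using a1 by (simp add: E1_def G0_def \<kappa>_def)
  next
    case False then have vp: "v > 0" using v by simp
    then have "G0 > 0" by (simp add: G0_def)
    moreover have "G0 powr (\<beta> - 1) = v" using a1 vp
      by (simp add: G0_def powr_powr \<beta>_def field_simps)
    moreover have "\<gamma> * \<beta> = 1" using a1 by (simp add: \<gamma>_def \<beta>_def)
    ultimately show ?thesis unfolding wg1 E1_def \<kappa>_def \<omega>_def[symmetric]
      by (simp add: mult.assoc[symmetric])
  qed
  have kp: "\<kappa> powr \<alpha> = v powr \<alpha> / w"
  proof -
    have "\<kappa> powr \<alpha> = v powr \<alpha> * (w powr (- 1 / \<alpha>)) powr \<alpha>"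
      unfolding \<kappa>_def using v by (simp add: powr_mult)
    also have "(w powr (- 1 / \<alpha>)) powr \<alpha> = w powr (- 1 / \<alpha> * \<alpha>)" by (rule powr_powr)
    also have "- 1 / \<alpha> * \<alpha> = - 1" using a1 by simp
    also have "w powr (- 1) = 1 / w" using wpos by (simp add: powr_minus divide_inverse)
    finally show ?thesis by simp
  qed
  have "\<kappa> * G0 = v powr \<alpha> * \<omega>" unfolding \<kappa>_def \<omega>_def[symmetric] using vG by (simp add: ac_simps flip: vG)
  then show "M * (\<gamma> * w powr (\<gamma> - 1) * \<alpha> * v powr \<alpha>) - \<kappa> * \<alpha> * M * G0 = - (M * w powr \<gamma>) * \<kappa> powr \<alpha>"
    unfolding wg1 kp wg using wpos a1 by (simp add: gamma_eq field_simps)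
qed

end


context setting begin

definition S0 where "S0 = {0<..T0} \<times> {0::real<..}"
definition uu where "uu p = Kf (fst p) (u0 (Q (fst p) (snd p)))"
definition mt where "mt p = - Mf (fst p) (snd p) * uu p powr \<alpha>"

lemma Mf_deriv:
  assumes p0: "p0 \<in> S0"
  shows "((\<lambda>p. Mf (fst p) (snd p)) has_derivative (\<lambda>h. mt p0 * fst h + uu p0 * snd h)) (at p0 within S0)"
proof -
  obtain t0 \<rho>0 where p0e: "p0 = (t0, \<rho>0)" by (cases p0)
  have t0: "0 < t0" "t0 \<le> T0" and r0: "0 < \<rho>0" using p0 by (auto simp: S0_def p0e)
  define s0 where "s0 = Q t0 \<rho>0"
  have s0: "0 \<le> s0" "P t0 s0 = \<rho>0" using Q_props[of t0 \<rho>0] t0 r0 by (auto simp: s0_def)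
  have s0p: "s0 > 0"
  proof (rule ccontr)
    assume "\<not> s0 > 0" then have "s0 = 0" using s0 by simp
    then show False using s0 r0 P_0 by simp
  qed
  define v where "v = u0 s0"
  have v: "v \<ge> 0" using nn s0 by (simp add: v_def)
  define G0 where "G0 = g s0"
  have G0: "G0 = v powr (\<alpha> - 1)" by (simp add: G0_def g_def v_def)
  have EG: "Epow \<beta> G0 = v powr \<alpha>" using Epow_g[OF s0(1)] by (simp add: G0_def v_def)
  define w where "w = 1 + \<alpha> * t0 * v powr \<alpha>"
  define \<kappa> where "\<kappa> = uu p0"
  have \<kappa>: "\<kappa> = v * w powr (- 1 / \<alpha>)" by (simp add: \<kappa>_def uu_def p0e Kf_def w_def v_def s0_def)
  define E1 where "E1 = (if G0 \<le> 0 then 0 else \<beta> * G0 powr (\<beta> - 1))"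
  have Mf0: "Mf t0 \<rho>0 = m0 s0 * w powr \<gamma>" by (simp add: Mf_def s0_def w_def v_def)
  have mt0: "mt p0 = - (m0 s0 * w powr \<gamma>) * \<kappa> powr \<alpha>" by (simp add: mt_def p0e Mf0 \<kappa>_def)
  note alg12 = point_alg(1,2)[OF v less_imp_le[OF t0(1)], folded G0, folded w_def, folded \<kappa>, folded E1_def]
  note alg3 = point_alg(3)[where M="m0 s0", OF v less_imp_le[OF t0(1)], folded G0, folded w_def, folded \<kappa>]
  have D: "(\<Psi> \<kappa> has_derivative (\<lambda>z. mt p0 * fst (fst z) + \<kappa> * snd (fst z))) (at ((t0, \<rho>0), (s0, G0)))"
  proof -
    have "(\<Psi> \<kappa> has_derivative (\<lambda>h. fst (snd h) * u0 s0 * w powr \<gamma>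
      + m0 s0 * (\<gamma> * w powr (\<gamma> - 1) * (\<alpha> * (fst (fst h) * Epow \<beta> G0 + t0 * (snd (snd h) * E1))))
      + \<kappa> * (snd (fst h) - (fst (snd h) + \<alpha> * (fst (snd h) * u0 s0 * G0 * t0 + m0 s0 * snd (snd h) * t0 + m0 s0 * G0 * fst (fst h))))))
     (at ((t0, \<rho>0), (s0, G0)))"
      using Psi_deriv[where \<kappa>=\<kappa> and rr=\<rho>0 and GG=G0, OF s0p less_imp_le[OF t0(1)]] by (simp only: EG w_def E1_def)
    moreover have "(\<lambda>h. fst (snd h) * u0 s0 * w powr \<gamma>
      + m0 s0 * (\<gamma> * w powr (\<gamma> - 1) * (\<alpha> * (fst (fst h) * Epow \<beta> G0 + t0 * (snd (snd h) * E1))))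
      + \<kappa> * (snd (fst h) - (fst (snd h) + \<alpha> * (fst (snd h) * u0 s0 * G0 * t0 + m0 s0 * snd (snd h) * t0 + m0 s0 * G0 * fst (fst h)))))
      = (\<lambda>z. mt p0 * fst (fst z) + \<kappa> * snd (fst z))"
    proof (rule ext)
      fix h :: "(real \<times> real) \<times> (real \<times> real)"
      obtain a b c d where h: "h = ((a, b), (c, d))" by (metis prod.collapse)
      have A: "v * w powr \<gamma> = \<kappa> * (1 + \<alpha> * v * G0 * t0)" using alg12(1) by simp
      have B: "\<gamma> * w powr (\<gamma> - 1) * E1 = \<kappa>" by (rule alg12(2))
      have C: "m0 s0 * (\<gamma> * w powr (\<gamma> - 1) * \<alpha> * v powr \<alpha>) - \<kappa> * \<alpha> * m0 s0 * G0 = mt p0"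
        using alg3 mt0 by simp
      have "c * v * w powr \<gamma> + m0 s0 * (\<gamma> * w powr (\<gamma> - 1) * (\<alpha> * (a * v powr \<alpha> + t0 * (d * E1))))
        + \<kappa> * (b - (c + \<alpha> * (c * v * G0 * t0 + m0 s0 * d * t0 + m0 s0 * G0 * a)))
        = c * (v * w powr \<gamma>) + m0 s0 * \<alpha> * t0 * d * (\<gamma> * w powr (\<gamma> - 1) * E1)
          + a * (m0 s0 * (\<gamma> * w powr (\<gamma> - 1) * \<alpha> * v powr \<alpha>)) + \<kappa> * b
          - c * (\<kappa> * (1 + \<alpha> * v * G0 * t0)) - \<kappa> * \<alpha> * m0 s0 * d * t0 - a * (\<kappa> * \<alpha> * m0 s0 * G0)"
        by (simp add: algebra_simps)
      also have "\<dots> = mt p0 * a + \<kappa> * b"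
        unfolding A B C[symmetric] by (simp add: algebra_simps)
      finally show "fst (snd h) * u0 s0 * w powr \<gamma>
      + m0 s0 * (\<gamma> * w powr (\<gamma> - 1) * (\<alpha> * (fst (fst h) * Epow \<beta> G0 + t0 * (snd (snd h) * E1))))
      + \<kappa> * (snd (fst h) - (fst (snd h) + \<alpha> * (fst (snd h) * u0 s0 * G0 * t0 + m0 s0 * snd (snd h) * t0 + m0 s0 * G0 * fst (fst h))))
      = mt p0 * fst (fst h) + \<kappa> * snd (fst h)"
        by (simp add: h EG v_def)
    qed
    ultimately show ?thesis by simp
  qed
  have yQ0: "yQ p0 = (s0, G0)" by (simp add: yQ_def p0e s0_def G0_def)
  have bl: "bounded_linear (\<lambda>h::real \<times> real. mt p0 * fst h + \<kappa> * snd h)"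
    by (intro bounded_linear_intros)
  have S0sub: "S0 \<subseteq> {0..T0} \<times> {0..}" by (auto simp: S0_def)
  have "((\<lambda>x. \<Psi> \<kappa> (x, yQ x)) has_derivative (\<lambda>h. mt p0 * fst h + \<kappa> * snd h)) (at p0 within S0)"
  proof (rule deriv_elim[where K = "KQ * (1 + Lg)"])
    show "(\<Psi> \<kappa> has_derivative (\<lambda>z. mt p0 * fst (fst z) + \<kappa> * snd (fst z))) (at (p0, yQ p0))"
      using D yQ0 by (simp only: p0e)
    show "bounded_linear (\<lambda>h::real \<times> real. mt p0 * fst h + \<kappa> * snd h)" by (rule bl)
    show "0 \<le> KQ * (1 + Lg)" using KQ_pos Lg_nn by simp
    show "\<forall>x'\<in>S0. norm (yQ x' - yQ p0) \<le> KQ * (1 + Lg) * norm (x' - p0)"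
      using yQ_lip p0 S0sub by blast
  qed
  then have "((\<lambda>x. \<Psi> \<kappa> (x, yQ x)) has_derivative (\<lambda>h. mt p0 * fst h + uu p0 * snd h)) (at p0 within S0)"
    by (simp add: \<kappa>_def)
  then show ?thesis
  proof (rule has_derivative_transform_within[OF _ zero_less_one p0])
    fix x' assume "x' \<in> S0" "dist x' p0 < 1"
    then show "\<Psi> \<kappa> (x', yQ x') = Mf (fst x') (snd x')"
      using Psi_y[of "fst x'" "snd x'" \<kappa>] by (auto simp: S0_def)
  qed
qed

end


context setting begin

lemma Mf_cont: "continuous_on ({0..T0} \<times> {0..}) (\<lambda>p. Mf (fst p) (snd p))"
proof -
  let ?D = "{0..T0} \<times> {0::real..}"
  let ?v = "\<lambda>p. u0 (Q (fst p) (snd p))"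
  have vnn: "\<forall>p\<in>?D. 0 \<le> ?v p"
    using nn Q_props(1) by (auto simp del: atLeast_iff)
  have c0: "continuous_on ?D (\<lambda>p. m0 (Q (fst p) (snd p)))"
    by (rule continuous_on_compose2[OF m0_cont Q_cont]) (auto intro: Q_props(1))
  have c1: "continuous_on ?D (\<lambda>p. ?v p powr \<alpha>)"
    using vnn a1 by (intro continuous_on_powr' uQ_cont continuous_on_const) auto
  have c2: "continuous_on ?D (\<lambda>p. 1 + \<alpha> * fst p * ?v p powr \<alpha>)"
    by (intro c1 continuous_on_add continuous_on_mult continuous_on_const continuous_on_fst continuous_on_id)
  have c3: "continuous_on ?D (\<lambda>p. (1 + \<alpha> * fst p * ?v p powr \<alpha>) powr \<gamma>)"
  proof (intro continuous_on_powr c2 continuous_on_const ballI)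
    fix p assume "p \<in> ?D"
    then have "0 \<le> \<alpha> * fst p * ?v p powr \<alpha>" using a1 by auto
    then show "1 + \<alpha> * fst p * ?v p powr \<alpha> \<noteq> 0" by linarith
  qed
  have "continuous_on ?D (\<lambda>p. m0 (Q (fst p) (snd p)) * (1 + \<alpha> * fst p * ?v p powr \<alpha>) powr \<gamma>)"
    by (intro continuous_on_mult c0 c3)
  then show ?thesis by (simp add: Mf_def)
qed

lemma uu_cont: "continuous_on ({0..T0} \<times> {0..}) uu"
proof -
  have "continuous_on ({0..T0} \<times> {0..}) (\<lambda>(t, \<rho>). charsol \<alpha> u0 t \<rho>)" by (rule charsol_cont)
  then show ?thesis
    by (rule continuous_on_cong[THEN iffD1, rotated 2]) (auto simp: charsol_eq uu_def)
qed

lemma Q_0: assumes "0 \<le> t" "t \<le> T0" shows "Q t 0 = 0"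
  using QP[OF assms order_refl] by (simp add: P_0)

lemma Mf_0: assumes "0 \<le> t" "t \<le> T0" shows "Mf t 0 = 0"
  by (simp add: Mf_def Q_0[OF assms] m0_0)

lemma mass_eq: assumes t: "0 < t" "t \<le> T0" and r: "0 \<le> \<rho>"
  shows "mass (charsol \<alpha> u0) t \<rho> = Mf t \<rho>"
proof -
  have cont: "continuous_on {0..\<rho>} (Mf t)"
  proof -
    have "continuous_on {0..\<rho>} (\<lambda>x. (\<lambda>p. Mf (fst p) (snd p)) (t, x))"
      by (rule continuous_on_compose2[OF Mf_cont, of _ "\<lambda>x. (t, x)"])
         (use t in \<open>auto intro!: continuous_intros\<close>)
    then show ?thesis by simp
  qed
  have der: "(Mf t has_vector_derivative charsol \<alpha> u0 t x) (at x)" if x: "x \<in> {0<..<\<rho>}" for x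
  proof -
    have "((\<lambda>x. (\<lambda>p. Mf (fst p) (snd p)) (t, x)) has_derivative
          (\<lambda>h. (\<lambda>h. mt (t, x) * fst h + uu (t, x) * snd h) ((\<lambda>h. (0, h)) h))) (at x within {0<..})"
    proof (rule has_derivative_in_compose2[where t = S0 and g' = "\<lambda>p h. mt p * fst h + uu p * snd h"])
      show "\<And>p. p \<in> S0 \<Longrightarrow> ((\<lambda>p. Mf (fst p) (snd p)) has_derivative (\<lambda>h. mt p * fst h + uu p * snd h)) (at p within S0)"
        by (rule Mf_deriv)
      show "(\<lambda>x. (t, x)) ` {0<..} \<subseteq> S0" using t by (auto simp: S0_def)
      show "x \<in> {0<..}" using x by simp
      show "((\<lambda>x. (t, x)) has_derivative (\<lambda>h. (0, h))) (at x within {0<..})"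
        by (auto intro!: derivative_eq_intros)
    qed
    then have "(Mf t has_derivative (\<lambda>h. uu (t, x) * h)) (at x within {0<..})" by simp
    then have "(Mf t has_derivative (\<lambda>h. uu (t, x) * h)) (at x)"
      using x by (subst (asm) at_within_open) auto
    moreover have "uu (t, x) = charsol \<alpha> u0 t x" using t x by (simp add: uu_def charsol_eq)
    ultimately show ?thesis
      by (simp add: has_vector_derivative_def mult.commute)
  qed
  have "(charsol \<alpha> u0 t has_integral (Mf t \<rho> - Mf t 0)) {0..\<rho>}"
    by (rule fundamental_theorem_of_calculus_interior[OF r cont der])
  then show ?thesis using Mf_0[of t] t by (simp add: mass_def integral_unique)
qed

lemma classical: "classical_solution_on \<alpha> ({0<..T0} \<times> {0<..}) (mass (charsol \<alpha> u0))"
  unfolding classical_solution_on_def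
proof (rule exI[of _ mt], rule exI[of _ uu], intro conjI ballI)
  have sub: "S0 \<subseteq> {0..T0} \<times> {0..}" by (auto simp: S0_def)
  have uuc: "continuous_on S0 uu" by (rule continuous_on_subset[OF uu_cont sub])
  show "continuous_on ({0<..T0} \<times> {0::real<..}) uu" using uuc by (simp add: S0_def)
  have "continuous_on S0 (\<lambda>p. - Mf (fst p) (snd p) * uu p powr \<alpha>)"
  proof (intro continuous_on_mult continuous_on_minus continuous_on_subset[OF Mf_cont sub] continuous_on_powr' uuc continuous_on_const ballI conjI impI)
    fix p assume "p \<in> S0"
    then show "0 \<le> uu p" using nn Q_props(1) by (auto simp: S0_def uu_def intro!: Kf_nn)
  next
    show "0 < \<alpha>" using a1 by simp
  qed
  then show "continuous_on ({0<..T0} \<times> {0::real<..}) mt" by (simp add: S0_def mt_def[abs_def])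
  fix p assume p: "p \<in> {0<..T0} \<times> {0::real<..}"
  have eqm: "mass (charsol \<alpha> u0) (fst x) (snd x) = Mf (fst x) (snd x)" if "x \<in> S0" for x
    using that by (intro mass_eq) (auto simp: S0_def)
  have "((\<lambda>p. Mf (fst p) (snd p)) has_derivative (\<lambda>h. mt p * fst h + uu p * snd h)) (at p within S0)"
    using p by (intro Mf_deriv) (simp add: S0_def)
  then have "((\<lambda>p. mass (charsol \<alpha> u0) (fst p) (snd p)) has_derivative (\<lambda>h. mt p * fst h + uu p * snd h)) (at p within S0)"
    by (rule has_derivative_transform_within[OF _ zero_less_one]) (use p eqm in \<open>auto simp: S0_def\<close>)
  then show "((\<lambda>(t, \<rho>). mass (charsol \<alpha> u0) t \<rho>) has_derivative (\<lambda>(h, k). mt p * h + uu p * k)) (at p within {0<..T0} \<times> {0::real<..})"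
    by (simp add: S0_def split_beta')
  show "mt p + mass (charsol \<alpha> u0) (fst p) (snd p) * uu p powr \<alpha> = 0"
    using eqm[of p] p by (simp add: S0_def mt_def)
qed

lemma mass_t0: assumes "0 \<le> \<rho>" shows "mass (charsol \<alpha> u0) 0 \<rho> = mass0 u0 \<rho>"
proof -
  have "charsol \<alpha> u0 0 x = u0 x" if "x \<in> {0..\<rho>}" for x
  proof -
    have x: "0 \<le> x" using that by simp
    have "Q 0 x = x" using QP[of 0 x] T0_pos x by (simp add: P_eq)
    then show ?thesis using charsol_eq[of 0 x] T0_pos x by (simp add: Kf_def)
  qed
  then show ?thesis unfolding mass_def mass0_def by (rule integral_cong)
qed

lemma mass_rho0: "mass (charsol \<alpha> u0) t 0 = 0" by (simp add: mass_def)

end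


theorem mainTheorem2:
  fixes \<alpha> :: real and u0 :: "real \<Rightarrow> real"
  assumes "\<alpha> > 1"
    and "\<forall>\<rho>\<ge>0. u0 \<rho> \<ge> 0"
    and "bounded (u0 ` {0..})"
    and "u0 integrable_on {0..}"
    and "\<exists>L. L-lipschitz_on {0..} (\<lambda>\<rho>. u0 \<rho> powr (\<alpha> - 1))"
  shows "\<exists>T>0. (\<forall>t\<in>{0..T}. bij_betw (charmap \<alpha> u0 t) {0..} {0..}
                          \<and> bilipschitz_on {0..} (charmap \<alpha> u0 t))
           \<and> continuous_on ({0..T} \<times> {0..}) (\<lambda>(t, \<rho>). charsol \<alpha> u0 t \<rho>)
           \<and> classical_solution_on \<alpha> ({0<..T} \<times> {0<..}) (mass (charsol \<alpha> u0))
           \<and> (\<forall>\<rho>\<ge>0. mass (charsol \<alpha> u0) 0 \<rho> = mass0 u0 \<rho>)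
           \<and> (\<forall>t\<in>{0..T}. mass (charsol \<alpha> u0) t 0 = 0)"
proof -
  obtain B where B: "\<forall>x\<in>u0 ` {0..}. norm x \<le> B" using assms(3) by (auto simp: bounded_iff)
  obtain Lg where Lg: "Lg-lipschitz_on {0..} (\<lambda>\<rho>. u0 \<rho> powr (\<alpha> - 1))" using assms(5) by blast
  define Mb where "Mb = integral {0..} u0"
  have mb: "mass0 u0 \<rho> \<le> Mb" if "\<rho> \<ge> 0" for \<rho>
    unfolding mass0_def Mb_def
    by (rule integral_subset_le) (use assms(2,4) that in \<open>auto intro: integrable_on_subinterval\<close>)
  interpret setting \<alpha> u0 B Lg Mb
  proof
    show "1 < \<alpha>" by (rule assms(1))
    show "\<And>\<rho>. 0 \<le> \<rho> \<Longrightarrow> 0 \<le> u0 \<rho>" using assms(2) by blast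
    show "u0 \<rho> \<le> B" if "0 \<le> \<rho>" for \<rho>
    proof -
      have "norm (u0 \<rho>) \<le> B" using B that by simp
      then show ?thesis by simp
    qed
    show "Lg-lipschitz_on {0..} (\<lambda>\<rho>. u0 \<rho> powr (\<alpha> - 1))" by (rule Lg)
    show "\<And>\<rho>. 0 \<le> \<rho> \<Longrightarrow> mass0 u0 \<rho> \<le> Mb" by (rule mb)
  qed
  show ?thesis
  proof (intro exI[of _ T0] conjI ballI allI impI)
    show "T0 > 0" by (rule T0_pos)
    fix t assume "t \<in> {0..T0}"
    then show "bij_betw (charmap \<alpha> u0 t) {0..} {0..}" "bilipschitz_on {0..} (charmap \<alpha> u0 t)"
      using P_bij P_bilip by (auto simp: P_fun)
  next
    show "continuous_on ({0..T0} \<times> {0..}) (\<lambda>(t, \<rho>). charsol \<alpha> u0 t \<rho>)" by (rule charsol_cont)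
    show "classical_solution_on \<alpha> ({0<..T0} \<times> {0<..}) (mass (charsol \<alpha> u0))" by (rule classical)
  next
    fix \<rho> :: real assume "0 \<le> \<rho>"
    then show "mass (charsol \<alpha> u0) 0 \<rho> = mass0 u0 \<rho>" by (rule mass_t0)
  next
    fix t assume "t \<in> {0..T0}"
    show "mass (charsol \<alpha> u0) t 0 = 0" by (rule mass_rho0)
  qed
qed


end
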